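(* Let $B$ be a vector space over a field $\mathbb{K}$ of characteristic zero with basis $b_1,\dots,b_n$, $n\geq3$, let $w\colon B\times B\to B^*$ be bilinear with $c_{ijk}:=w(b_i,b_j)(b_k)$, and let $b_1^*,\dots,b_n^*$ be the dual basis. On $\mathfrak{L}=B\oplus B^*$ define $[b+\beta,b'+\beta']=w(b,b')$ and $\phi(b+\beta,b'+\beta')=\beta(b')+\beta'(b)$. The following are equivalent: (a) $(\mathfrak{L},\phi)$ is a $2$-step nilpotent quadratic Lie algebra. (b) $w$ is a nonzero cyclic $2$-cocycle (for the abelian Lie algebra $B$) and $(\mathfrak{L},\phi)=(T^*_wB,q_B)$. (c) Setting $A_k=\mathrm{span}\langle b_i,b_i^*:i=1,\dots,k\rangle$ and, for $1\le i\le n$, $d_{i-1}\colon A_{i-1}\to A_{i-1}$ linear with $d_{i-1}(b_j^* )=0$ and $d_{i-1}(b_j)=\sum_{k=1}^{i-1}c_{ijk}b_k^*$ for $j<i$, the sequence $\{(A_k,f_k)\}_{k=0}^n$ starting at $A_0=\{0\}$, $f_0=0$, given by $\{(b_{k+1},d_k)\}_{k=0}^{n-1}$, is a chain of one-dimensional double extensions satisfying (NNP) and (2SP), and $(A_n,f_n)=(\mathfrak{L},\phi)$. (d) The family $\{M_1,\dots,M_n\}$ of $n\times n$ matrices where the $(k,j)$ entry of $M_i$ is $c_{ijk}$ is a non-null $n$-quadratic family, and the quadratic algebra it defines equals $(\mathfrak{L},\phi)$ (under $v_i=b_i$, $z_i=b_i^*$).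
   Context: A quadratic Lie algebra is a Lie algebra with a non-degenerate symmetric bilinear form $\phi$ with $\phi([x,y],z)+\phi(y,[x,z])=0$; $2$-step nilpotent means $[L,[L,L]]=0\neq[L,L]$. For $B$ abelian, a $2$-cocycle $w\colon B\times B\to B^*$ (coadjoint coefficients) is a skew-symmetric bilinear map; $w$ is cyclic if $w(a,b)(c)=w(c,a)(b)=w(b,c)(a)$. The $T^*$-extension $(T^*_wB,q_B)$ of abelian $B$ is $B\oplus B^*$ with bracket $[b+\beta,b'+\beta']=w(b,b')$ and $q_B(b+\beta,b'+\beta')=\beta(b')+\beta'(b)$. One-dimensional double extension of a quadratic Lie algebra $(A,f)$ by $(b,d)$, $d$ an $f$-skew-symmetric derivation ($f(d(x),y)+f(x,d(y))=0$): the space $\mathbb{K}b\oplus A\oplus\mathbb{K}b^*$ with bracket $[\lambda b+a+\mu b^*,\lambda'b+a'+\mu'b^*]=\lambda d(a')-\lambda'd(a)+[a,a']_A+f(d(a),a')b^*$ and form $(\lambda b+a+\mu b^*,\lambda'b+a'+\mu'b^* )\mapsto\lambda\mu'+\lambda'\mu+f(a,a')$. A chain of one-dimensional double extensions $\{(A_k,f_k)\}_{k=0}^n$ by $\{(b_{k+1},d_k)\}$: $A_0=0$, $f_0=0$, each $d_k$ an $f_k$-skew-symmetric derivation of $A_k$, and $(A_{k+1},f_{k+1})$ the one-dimensional double extension of $(A_k,f_k)$ by $(b_{k+1},d_k)$. With $A_{k,2}=\mathrm{span}\langle b_1^*,\dots,b_k^*\rangle$: (NNP) means $d_k\ne0$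 for some $k$; (2SP) means $\mathrm{im}\,d_k\subseteq A_{k,2}\subseteq\ker d_k$ for all $k\ge1$. A family $\{M_1,\dots,M_n\}$ of $n\times n$ matrices is $n$-quadratic if each $M_i$ is skew-symmetric, the $i$-th column of $M_i$ is zero, and for $j>i$ the $j$-th column of $M_i$ is the negative of the $i$-th column of $M_j$; non-null means not all matrices are zero. The quadratic algebra defined by such a family (with $m_{ijk}$ the $(k,j)$ entry of $M_i$) has basis $v_1,\dots,v_n,z_1,\dots,z_n$, bracket $[v_i,v_j]=\sum_k m_{ijk}z_k$, $[z_i,\cdot]=0$, and form $\varphi(v_i,v_j)=\varphi(z_i,z_j)=0$, $\varphi(v_i,z_j)=\delta_{ij}$. *)

theory Defs
  imports Main "HOL-Library.Function_Algebras"
begin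

text \<open>Vectors are coordinate functions; vector addition, zero and negation are
pointwise (Function_Algebras).  Scalar multiplication:\<close>

definition sc :: "'a::field \<Rightarrow> ('i \<Rightarrow> 'a) \<Rightarrow> ('i \<Rightarrow> 'a)" where
  "sc a x = (\<lambda>t. a * x t)"

definition subspace_c :: "('i \<Rightarrow> 'a::field) set \<Rightarrow> bool" where
  "subspace_c V \<longleftrightarrow> 0 \<in> V \<and> (\<forall>x\<in>V. \<forall>y\<in>V. x + y \<in> V) \<and> (\<forall>a. \<forall>x\<in>V. sc a x \<in> V)"

definition bilinear_map_on :: "('i \<Rightarrow> 'a::field) set \<Rightarrow> (('i \<Rightarrow> 'a) \<Rightarrow> ('i \<Rightarrow> 'a) \<Rightarrow> ('j \<Rightarrow> 'a)) \<Rightarrow> bool" where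
  "bilinear_map_on V br \<longleftrightarrow> (\<forall>x\<in>V. \<forall>y\<in>V. \<forall>z\<in>V. \<forall>a.
      br (x + y) z = br x z + br y z \<and> br x (y + z) = br x y + br x z \<and>
      br (sc a x) y = sc a (br x y) \<and> br x (sc a y) = sc a (br x y))"

definition bilinear_form_on :: "('i \<Rightarrow> 'a::field) set \<Rightarrow> (('i \<Rightarrow> 'a) \<Rightarrow> ('i \<Rightarrow> 'a) \<Rightarrow> 'a) \<Rightarrow> bool" where
  "bilinear_form_on V f \<longleftrightarrow> (\<forall>x\<in>V. \<forall>y\<in>V. \<forall>z\<in>V. \<forall>a.
      f (x + y) z = f x z + f y z \<and> f x (y + z) = f x y + f x z \<and>
      f (sc a x) y = a * f x y \<and> f x (sc a y) = a * f x y)"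

definition lie_algebra_on :: "('i \<Rightarrow> 'a::field) set \<Rightarrow> (('i \<Rightarrow> 'a) \<Rightarrow> ('i \<Rightarrow> 'a) \<Rightarrow> ('i \<Rightarrow> 'a)) \<Rightarrow> bool" where
  "lie_algebra_on V br \<longleftrightarrow> subspace_c V \<and> (\<forall>x\<in>V. \<forall>y\<in>V. br x y \<in> V) \<and>
     bilinear_map_on V br \<and> (\<forall>x\<in>V. br x x = 0) \<and>
     (\<forall>x\<in>V. \<forall>y\<in>V. \<forall>z\<in>V. br x (br y z) + br y (br z x) + br z (br x y) = 0)"

definition quadratic_lie_algebra :: "('i \<Rightarrow> 'a::field) set \<Rightarrow> (('i \<Rightarrow> 'a) \<Rightarrow> ('i \<Rightarrow> 'a) \<Rightarrow> ('i \<Rightarrow> 'a))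
     \<Rightarrow> (('i \<Rightarrow> 'a) \<Rightarrow> ('i \<Rightarrow> 'a) \<Rightarrow> 'a) \<Rightarrow> bool" where
  "quadratic_lie_algebra V br \<phi> \<longleftrightarrow> lie_algebra_on V br \<and> bilinear_form_on V \<phi> \<and>
     (\<forall>x\<in>V. \<forall>y\<in>V. \<phi> x y = \<phi> y x) \<and>
     (\<forall>x\<in>V. (\<forall>y\<in>V. \<phi> x y = 0) \<longrightarrow> x = 0) \<and>
     (\<forall>x\<in>V. \<forall>y\<in>V. \<forall>z\<in>V. \<phi> (br x y) z + \<phi> y (br x z) = 0)"

definition two_step_nilpotent :: "('i \<Rightarrow> 'a::field) set \<Rightarrow> (('i \<Rightarrow> 'a) \<Rightarrow> ('i \<Rightarrow> 'a) \<Rightarrow> ('i \<Rightarrow> 'a)) \<Rightarrow> bool" where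
  "two_step_nilpotent V br \<longleftrightarrow> (\<forall>x\<in>V. \<forall>y\<in>V. \<forall>z\<in>V. br x (br y z) = 0) \<and>
     (\<exists>x\<in>V. \<exists>y\<in>V. br x y \<noteq> 0)"

text \<open>An element of L is a coordinate function on nat + nat: the coefficient of
b_i is v (Inl i), the coefficient of the dual basis vector b_i^* is v (Inr i),
indices 1..n.  Acar k = span of b_i, b_i^* for i = 1..k (Acar n = L, Acar 0 = {0}).
Elements of B are coordinate functions nat => 'a supported in 1..n.\<close>

definition Acar :: "nat \<Rightarrow> (nat + nat \<Rightarrow> 'a::field) set" where
  "Acar k = {v. \<forall>i. (i < 1 \<or> k < i) \<longrightarrow> v (Inl i) = 0 \<and> v (Inr i) = 0}"

definition A2car :: "nat \<Rightarrow> (nat + nat \<Rightarrow> 'a::field) set" where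
  "A2car k = {v. \<forall>i. v (Inl i) = 0 \<and> ((i < 1 \<or> k < i) \<longrightarrow> v (Inr i) = 0)}"

definition Bcar :: "nat \<Rightarrow> (nat \<Rightarrow> 'a::field) set" where
  "Bcar n = {x. \<forall>i. (i < 1 \<or> n < i) \<longrightarrow> x i = 0}"

definition bvec :: "nat \<Rightarrow> (nat + nat \<Rightarrow> 'a::field)" where
  "bvec i = (\<lambda>t. if t = Inl i then 1 else 0)"

definition dvec :: "nat \<Rightarrow> (nat + nat \<Rightarrow> 'a::field)" where
  "dvec i = (\<lambda>t. if t = Inr i then 1 else 0)"

definition Bbasis :: "nat \<Rightarrow> (nat \<Rightarrow> 'a::field)" where
  "Bbasis i = (\<lambda>j. if j = i then 1 else 0)"

text \<open>The bilinear map w : B x B -> B^* determined by c_ijk = w(b_i,b_j)(b_k);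
  wfun c n x y z = w(x,y)(z).\<close>

definition wfun :: "(nat \<Rightarrow> nat \<Rightarrow> nat \<Rightarrow> 'a::field) \<Rightarrow> nat \<Rightarrow> (nat \<Rightarrow> 'a) \<Rightarrow> (nat \<Rightarrow> 'a) \<Rightarrow> (nat \<Rightarrow> 'a) \<Rightarrow> 'a" where
  "wfun c n x y z = (\<Sum>i=1..n. \<Sum>j=1..n. \<Sum>k=1..n. x i * y j * z k * c i j k)"

definition Lbr :: "(nat \<Rightarrow> nat \<Rightarrow> nat \<Rightarrow> 'a::field) \<Rightarrow> nat \<Rightarrow> (nat + nat \<Rightarrow> 'a) \<Rightarrow> (nat + nat \<Rightarrow> 'a) \<Rightarrow> (nat + nat \<Rightarrow> 'a)" where
  "Lbr c n v u = (\<lambda>t. case t of Inl _ \<Rightarrow> 0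
      | Inr k \<Rightarrow> if 1 \<le> k \<and> k \<le> n then (\<Sum>i=1..n. \<Sum>j=1..n. v (Inl i) * u (Inl j) * c i j k) else 0)"

definition Lform :: "nat \<Rightarrow> (nat + nat \<Rightarrow> 'a::field) \<Rightarrow> (nat + nat \<Rightarrow> 'a) \<Rightarrow> 'a" where
  "Lform n v u = (\<Sum>i=1..n. v (Inr i) * u (Inl i) + u (Inr i) * v (Inl i))"

text \<open>For abelian B, a 2-cocycle with coadjoint coefficients is a skew-symmetric
bilinear map w : B x B -> B^* (elements of B^* are linear functionals on B).\<close>

definition cocycle_abelian :: "nat \<Rightarrow> ((nat \<Rightarrow> 'a::field) \<Rightarrow> (nat \<Rightarrow> 'a) \<Rightarrow> (nat \<Rightarrow> 'a) \<Rightarrow> 'a) \<Rightarrow> bool" where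
  "cocycle_abelian n w \<longleftrightarrow>
     (\<forall>x\<in>Bcar n. \<forall>y\<in>Bcar n. \<forall>z\<in>Bcar n. \<forall>u\<in>Bcar n. \<forall>a.
        w (x + u) y z = w x y z + w u y z \<and> w x (y + u) z = w x y z + w x u z \<and>
        w x y (z + u) = w x y z + w x y u \<and>
        w (sc a x) y z = a * w x y z \<and> w x (sc a y) z = a * w x y z \<and> w x y (sc a z) = a * w x y z) \<and>
     (\<forall>x\<in>Bcar n. \<forall>y\<in>Bcar n. \<forall>z\<in>Bcar n. w x y z = - w y x z)"

definition cyclic_cocycle :: "nat \<Rightarrow> ((nat \<Rightarrow> 'a::field) \<Rightarrow> (nat \<Rightarrow> 'a) \<Rightarrow> (nat \<Rightarrow> 'a) \<Rightarrow> 'a) \<Rightarrow> bool" where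
  "cyclic_cocycle n w \<longleftrightarrow> cocycle_abelian n w \<and>
     (\<forall>x\<in>Bcar n. \<forall>y\<in>Bcar n. \<forall>z\<in>Bcar n. w x y z = w z x y \<and> w z x y = w y z x)"

definition nonzero_w :: "nat \<Rightarrow> ((nat \<Rightarrow> 'a::field) \<Rightarrow> (nat \<Rightarrow> 'a) \<Rightarrow> (nat \<Rightarrow> 'a) \<Rightarrow> 'a) \<Rightarrow> bool" where
  "nonzero_w n w \<longleftrightarrow> (\<exists>x\<in>Bcar n. \<exists>y\<in>Bcar n. \<exists>z\<in>Bcar n. w x y z \<noteq> 0)"

text \<open>T*_w B = B + B^* with [b+beta,b'+beta'] = w(b,b') and q_B; written in the
basis b_i, b_i^* (coordinate of w(b,b') on b_k^* is w(b,b')(b_k)).\<close>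

definition Tstar_br :: "nat \<Rightarrow> ((nat \<Rightarrow> 'a::field) \<Rightarrow> (nat \<Rightarrow> 'a) \<Rightarrow> (nat \<Rightarrow> 'a) \<Rightarrow> 'a)
     \<Rightarrow> (nat + nat \<Rightarrow> 'a) \<Rightarrow> (nat + nat \<Rightarrow> 'a) \<Rightarrow> (nat + nat \<Rightarrow> 'a)" where
  "Tstar_br n w v u = (\<lambda>t. case t of Inl _ \<Rightarrow> 0
      | Inr k \<Rightarrow> if 1 \<le> k \<and> k \<le> n then w (v \<circ> Inl) (u \<circ> Inl) (Bbasis k) else 0)"

definition qB :: "nat \<Rightarrow> (nat + nat \<Rightarrow> 'a::field) \<Rightarrow> (nat + nat \<Rightarrow> 'a) \<Rightarrow> 'a" where
  "qB n v u = (\<Sum>i=1..n. v (Inr i) * u (Inl i)) + (\<Sum>i=1..n. u (Inr i) * v (Inl i))"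

text \<open>proj k v is the A_k-component of v.  The one-dimensional double extension of
(A_k, br, f) by (b, d) is realised on A_{k+1} with b = b_{k+1}, b^* = b_{k+1}^*.\<close>

definition proj :: "nat \<Rightarrow> (nat + nat \<Rightarrow> 'a::field) \<Rightarrow> (nat + nat \<Rightarrow> 'a)" where
  "proj k v = (\<lambda>t. case t of Inl i \<Rightarrow> if 1 \<le> i \<and> i \<le> k then v t else 0
                          | Inr i \<Rightarrow> if 1 \<le> i \<and> i \<le> k then v t else 0)"

definition dext_br :: "nat \<Rightarrow> ((nat + nat \<Rightarrow> 'a::field) \<Rightarrow> (nat + nat \<Rightarrow> 'a) \<Rightarrow> (nat + nat \<Rightarrow> 'a))
    \<Rightarrow> ((nat + nat \<Rightarrow> 'a) \<Rightarrow> (nat + nat \<Rightarrow> 'a) \<Rightarrow> 'a) \<Rightarrow> ((nat + nat \<Rightarrow> 'a) \<Rightarrow> (nat + nat \<Rightarrow> 'a))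
    \<Rightarrow> (nat + nat \<Rightarrow> 'a) \<Rightarrow> (nat + nat \<Rightarrow> 'a) \<Rightarrow> (nat + nat \<Rightarrow> 'a)" where
  "dext_br k br f d x y =
     (let l = x (Inl (Suc k)); l' = y (Inl (Suc k)); a = proj k x; a' = proj k y
      in sc l (d a') - sc l' (d a) + br a a' + sc (f (d a) a') (dvec (Suc k)))"

definition dext_f :: "nat \<Rightarrow> ((nat + nat \<Rightarrow> 'a::field) \<Rightarrow> (nat + nat \<Rightarrow> 'a) \<Rightarrow> 'a)
    \<Rightarrow> (nat + nat \<Rightarrow> 'a) \<Rightarrow> (nat + nat \<Rightarrow> 'a) \<Rightarrow> 'a" where
  "dext_f k f x y = x (Inl (Suc k)) * y (Inr (Suc k)) + y (Inl (Suc k)) * x (Inr (Suc k))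
                    + f (proj k x) (proj k y)"

fun chain_br :: "(nat \<Rightarrow> (nat + nat \<Rightarrow> 'a::field) \<Rightarrow> (nat + nat \<Rightarrow> 'a)) \<Rightarrow> nat
     \<Rightarrow> (nat + nat \<Rightarrow> 'a) \<Rightarrow> (nat + nat \<Rightarrow> 'a) \<Rightarrow> (nat + nat \<Rightarrow> 'a)"
and chain_f :: "(nat \<Rightarrow> (nat + nat \<Rightarrow> 'a::field) \<Rightarrow> (nat + nat \<Rightarrow> 'a)) \<Rightarrow> nat
     \<Rightarrow> (nat + nat \<Rightarrow> 'a) \<Rightarrow> (nat + nat \<Rightarrow> 'a) \<Rightarrow> 'a" where
  "chain_br d 0 = (\<lambda>x y. 0)"
| "chain_br d (Suc k) = dext_br k (chain_br d k) (chain_f d k) (d k)"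
| "chain_f d 0 = (\<lambda>x y. 0)"
| "chain_f d (Suc k) = dext_f k (chain_f d k)"

definition is_chain :: "nat \<Rightarrow> (nat \<Rightarrow> (nat + nat \<Rightarrow> 'a::field) \<Rightarrow> (nat + nat \<Rightarrow> 'a)) \<Rightarrow> bool" where
  "is_chain n d \<longleftrightarrow> (\<forall>k<n.
     (\<forall>x\<in>Acar k. d k x \<in> Acar k) \<and>
     (\<forall>x\<in>Acar k. \<forall>y\<in>Acar k. \<forall>a. d k (x + y) = d k x + d k y \<and> d k (sc a x) = sc a (d k x)) \<and>
     (\<forall>x\<in>Acar k. \<forall>y\<in>Acar k. chain_f d k (d k x) y + chain_f d k x (d k y) = 0) \<and>
     (\<forall>x\<in>Acar k. \<forall>y\<in>Acar k.
        d k (chain_br d k x y) = chain_br d k (d k x) y + chain_br d k x (d k y)))"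

definition NNP :: "nat \<Rightarrow> (nat \<Rightarrow> (nat + nat \<Rightarrow> 'a::field) \<Rightarrow> (nat + nat \<Rightarrow> 'a)) \<Rightarrow> bool" where
  "NNP n d \<longleftrightarrow> (\<exists>k<n. \<exists>x\<in>Acar k. d k x \<noteq> 0)"

definition TwoSP :: "nat \<Rightarrow> (nat \<Rightarrow> (nat + nat \<Rightarrow> 'a::field) \<Rightarrow> (nat + nat \<Rightarrow> 'a)) \<Rightarrow> bool" where
  "TwoSP n d \<longleftrightarrow> (\<forall>k. 1 \<le> k \<and> k < n \<longrightarrow>
     (\<forall>x\<in>Acar k. d k x \<in> A2car k) \<and> (\<forall>x\<in>A2car k. d k x = 0))"

text \<open>The specific maps d_{i-1} (here d k with k = i-1): d_k(b_j^*) = 0 and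
d_k(b_j) = sum_{m=1..k} c_{(k+1) j m} b_m^* for j <= k, extended linearly.\<close>

definition dmap :: "(nat \<Rightarrow> nat \<Rightarrow> nat \<Rightarrow> 'a::field) \<Rightarrow> nat \<Rightarrow> (nat + nat \<Rightarrow> 'a) \<Rightarrow> (nat + nat \<Rightarrow> 'a)" where
  "dmap c k v = (\<lambda>t. case t of Inl _ \<Rightarrow> 0
      | Inr m \<Rightarrow> if 1 \<le> m \<and> m \<le> k then (\<Sum>j=1..k. v (Inl j) * c (Suc k) j m) else 0)"

text \<open>An n x n matrix is a function row => column => entry on indices 1..n.\<close>

definition n_quadratic_family :: "nat \<Rightarrow> (nat \<Rightarrow> nat \<Rightarrow> nat \<Rightarrow> 'a::field) \<Rightarrow> bool" where
  "n_quadratic_family n M \<longleftrightarrow> (\<forall>i\<in>{1..n}.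
     (\<forall>k\<in>{1..n}. \<forall>j\<in>{1..n}. M i k j = - M i j k) \<and>
     (\<forall>k\<in>{1..n}. M i k i = 0) \<and>
     (\<forall>j\<in>{1..n}. i < j \<longrightarrow> (\<forall>k\<in>{1..n}. M i k j = - M j k i)))"

definition non_null_family :: "nat \<Rightarrow> (nat \<Rightarrow> nat \<Rightarrow> nat \<Rightarrow> 'a::field) \<Rightarrow> bool" where
  "non_null_family n M \<longleftrightarrow> (\<exists>i\<in>{1..n}. \<exists>k\<in>{1..n}. \<exists>j\<in>{1..n}. M i k j \<noteq> 0)"

text \<open>The quadratic algebra defined by the family, with v_i = Inl i, z_i = Inr i,
m_ijk = (k,j) entry of M_i; [v_i,v_j] = sum_k m_ijk z_k, z central.\<close>

definition qa_br :: "nat \<Rightarrow> (nat \<Rightarrow> nat \<Rightarrow> nat \<Rightarrow> 'a::field) \<Rightarrow> (nat + nat \<Rightarrow> 'a) \<Rightarrow> (nat + nat \<Rightarrow> 'a) \<Rightarrow> (nat + nat \<Rightarrow> 'a)" where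
  "qa_br n M v u = (\<lambda>t. case t of Inl _ \<Rightarrow> 0
      | Inr k \<Rightarrow> if 1 \<le> k \<and> k \<le> n then (\<Sum>i=1..n. \<Sum>j=1..n. v (Inl i) * u (Inl j) * M i k j) else 0)"

definition qa_form :: "nat \<Rightarrow> (nat + nat \<Rightarrow> 'a::field) \<Rightarrow> (nat + nat \<Rightarrow> 'a) \<Rightarrow> 'a" where
  "qa_form n v u = (\<Sum>i=1..n. \<Sum>j=1..n. (if i = j then 1 else 0) * (v (Inl i) * u (Inr j) + v (Inr j) * u (Inl i)))"

end

theory Submission
  imports Defs
begin
lemma ifz_mult1[simp]: "(if P then x else 0) * (y::'a::field) = (if P then x * y else 0)" by simp
lemma ifz_mult2[simp]: "(y::'a::field) * (if P then x else 0) = (if P then y * x else 0)" by simp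

lemma negself: fixes a :: "'a::field_char_0" shows "a = - a \<longleftrightarrow> a = 0"
proof
  assume "a = - a" then have "2 * a = 0" by (metis mult_2 add.right_inverse)
  then show "a = 0" by simp
qed simp

definition BL :: "nat \<Rightarrow> (nat \<Rightarrow> nat \<Rightarrow> nat \<Rightarrow> 'a::field) \<Rightarrow> (nat+nat \<Rightarrow> 'a) \<Rightarrow> (nat+nat \<Rightarrow> 'a) \<Rightarrow> (nat+nat \<Rightarrow> 'a)" where
 "BL n A v u = (\<lambda>t. case t of Inl _ \<Rightarrow> 0 | Inr m \<Rightarrow> if 1 \<le> m \<and> m \<le> n then (\<Sum>i=1..n. \<Sum>j=1..n. v (Inl i) * u (Inl j) * A i j m) else 0)"

lemma BL_Inl[simp]: "BL n A v u (Inl i) = 0" by (simp add: BL_def)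
lemma BL_Inr: "BL n A v u (Inr m) = (if 1 \<le> m \<and> m \<le> n then (\<Sum>i=1..n. \<Sum>j=1..n. v (Inl i) * u (Inl j) * A i j m) else 0)"
  by (simp add: BL_def)

lemma bvec_Acar: "a \<in> {1..n} \<Longrightarrow> bvec a \<in> Acar n"
  by (auto simp: Acar_def bvec_def)
lemma dvec_Acar: "a \<in> {1..n} \<Longrightarrow> dvec a \<in> Acar n"
  by (auto simp: Acar_def dvec_def)

lemma BL_basis: "a\<in>{1..n} \<Longrightarrow> b\<in>{1..n} \<Longrightarrow> m\<in>{1..n} \<Longrightarrow> BL n A (bvec a) (bvec b) (Inr m) = A a b m"
  by (simp add: BL_Inr bvec_def del: atLeastAtMost_iff) auto

lemma BL_eq_iff: "(\<forall>x\<in>Acar n. \<forall>y\<in>Acar n. BL n A x y = BL n B x y) \<longleftrightarrow> (\<forall>a\<in>{1..n}. \<forall>b\<in>{1..n}. \<forall>m\<in>{1..n}. A a b m = B a b m)"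
proof
  assume H: "\<forall>x\<in>Acar n. \<forall>y\<in>Acar n. BL n A x y = BL n B x y"
  show "\<forall>a\<in>{1..n}. \<forall>b\<in>{1..n}. \<forall>m\<in>{1..n}. A a b m = B a b m"
  proof (intro ballI)
    fix a b m assume abm: "a \<in> {1..n}" "b \<in> {1..n}" "m \<in> {1..n}"
    have "BL n A (bvec a) (bvec b) (Inr m) = BL n B (bvec a) (bvec b) (Inr m)"
      using H bvec_Acar abm by metis
    then show "A a b m = B a b m" using abm by (simp add: BL_basis)
  qed
next
  assume H: "\<forall>a\<in>{1..n}. \<forall>b\<in>{1..n}. \<forall>m\<in>{1..n}. A a b m = B a b m"
  show "\<forall>x\<in>Acar n. \<forall>y\<in>Acar n. BL n A x y = BL n B x y"
  proof (intro ballI ext)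
    fix x y :: "nat+nat \<Rightarrow> 'a" and t
    show "BL n A x y t = BL n B x y t"
    proof (cases t)
      case (Inr m)
      then show ?thesis using H by (auto simp: BL_Inr intro!: sum.cong)
    qed simp
  qed
qed

lemma BL_zero_left: "(\<And>i. v (Inl i) = 0) \<Longrightarrow> BL n A v u = 0"
  by (auto simp: BL_def fun_eq_iff split: sum.split)
lemma BL_zero_right: "(\<And>i. u (Inl i) = 0) \<Longrightarrow> BL n A v u = 0"
  by (auto simp: BL_def fun_eq_iff split: sum.split)
lemma BL_Acar: "BL n A v u \<in> Acar n"
  by (auto simp: Acar_def BL_Inr)

lemma BL_add_left: "BL n A (x + y) z = BL n A x z + BL n A y z"
  by (auto simp: BL_def fun_eq_iff algebra_simps sum.distrib split: sum.split)
lemma BL_add_right: "BL n A z (x + y) = BL n A z x + BL n A z y"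
  by (auto simp: BL_def fun_eq_iff algebra_simps sum.distrib split: sum.split)
lemma BL_sc_left: "BL n A (sc a x) y = sc a (BL n A x y)"
  by (auto simp: BL_def sc_def fun_eq_iff sum_distrib_left algebra_simps split: sum.split)
lemma BL_sc_right: "BL n A x (sc a y) = sc a (BL n A x y)"
  by (auto simp: BL_def sc_def fun_eq_iff sum_distrib_left algebra_simps split: sum.split)

lemma Lbr_BL: "Lbr c n = BL n c"
  by (simp add: Lbr_def BL_def fun_eq_iff)
lemma qa_br_BL: "qa_br n (\<lambda>i k j. c i j k) = BL n c"
  by (simp add: qa_br_def BL_def fun_eq_iff)
lemma Tstar_BL: "Tstar_br n (wfun c n) = BL n c"
  apply (auto simp: Tstar_br_def BL_def fun_eq_iff wfun_def Bbasis_def split: sum.split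
      simp del: atLeastAtMost_iff intro!: sum.cong)
  apply auto
  done
lemma qa_form_Lform: "qa_form n = Lform n"
  by (auto simp: qa_form_def Lform_def fun_eq_iff algebra_simps sum.distrib simp del: atLeastAtMost_iff intro!: sum.cong)
lemma qB_Lform: "qB n = Lform n"
  by (auto simp: qB_def Lform_def fun_eq_iff algebra_simps sum.distrib)

definition alt :: "nat \<Rightarrow> (nat \<Rightarrow> nat \<Rightarrow> nat \<Rightarrow> 'a::field) \<Rightarrow> bool" where
  "alt n c \<longleftrightarrow> (\<forall>i\<in>{1..n}. \<forall>j\<in>{1..n}. \<forall>k\<in>{1..n}. c i j k = - c j i k \<and> c i j k = c j k i)"
definition nzc :: "nat \<Rightarrow> (nat \<Rightarrow> nat \<Rightarrow> nat \<Rightarrow> 'a::field) \<Rightarrow> bool" where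
  "nzc n c \<longleftrightarrow> (\<exists>i\<in>{1..n}. \<exists>j\<in>{1..n}. \<exists>k\<in>{1..n}. c i j k \<noteq> 0)"

lemma alt_12: "alt n c \<Longrightarrow> i\<in>{1..n} \<Longrightarrow> j\<in>{1..n} \<Longrightarrow> k\<in>{1..n} \<Longrightarrow> c i j k = - c j i k"
  unfolding alt_def by blast
lemma alt_rot: "alt n c \<Longrightarrow> i\<in>{1..n} \<Longrightarrow> j\<in>{1..n} \<Longrightarrow> k\<in>{1..n} \<Longrightarrow> c i j k = c j k i"
  unfolding alt_def by blast
lemma alt_23: "alt n c \<Longrightarrow> i\<in>{1..n} \<Longrightarrow> j\<in>{1..n} \<Longrightarrow> k\<in>{1..n} \<Longrightarrow> c i j k = - c i k j"
  using alt_12[of n c i j k] alt_rot[of n c j i k] by simp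
lemma alt_rot2: "alt n c \<Longrightarrow> i\<in>{1..n} \<Longrightarrow> j\<in>{1..n} \<Longrightarrow> k\<in>{1..n} \<Longrightarrow> c i j k = c k i j"
  using alt_rot[of n c k i j] by simp
lemma alt_ii: fixes c :: "nat \<Rightarrow> nat \<Rightarrow> nat \<Rightarrow> 'a::field_char_0"
  shows "alt n c \<Longrightarrow> i\<in>{1..n} \<Longrightarrow> k\<in>{1..n} \<Longrightarrow> c i i k = 0"
  using alt_12[of n c i i k] negself by metis
lemma alt_jj: fixes c :: "nat \<Rightarrow> nat \<Rightarrow> nat \<Rightarrow> 'a::field_char_0"
  shows "alt n c \<Longrightarrow> i\<in>{1..n} \<Longrightarrow> k\<in>{1..n} \<Longrightarrow> c i k k = 0"
  using alt_23[of n c i k k] negself by metis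

lemma sum_rot: "(\<Sum>i\<in>S. \<Sum>j\<in>T. \<Sum>k\<in>U. f i j k) = (\<Sum>k\<in>U. \<Sum>i\<in>S. \<Sum>j\<in>T. f i j k)"
proof -
  have "(\<Sum>i\<in>S. \<Sum>j\<in>T. \<Sum>k\<in>U. f i j k) = (\<Sum>i\<in>S. \<Sum>k\<in>U. \<Sum>j\<in>T. f i j k)"
    by (intro sum.cong refl) (rule sum.swap)
  also have "\<dots> = (\<Sum>k\<in>U. \<Sum>i\<in>S. \<Sum>j\<in>T. f i j k)" by (rule sum.swap)
  finally show ?thesis .
qed

lemma Pd_iff: fixes c :: "nat \<Rightarrow> nat \<Rightarrow> nat \<Rightarrow> 'a::field_char_0"
  shows "(n_quadratic_family n (\<lambda>i k j. c i j k) \<and> non_null_family n (\<lambda>i k j. c i j k)) \<longleftrightarrow> alt n c \<and> nzc n c"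
proof
  assume H: "n_quadratic_family n (\<lambda>i k j. c i j k) \<and> non_null_family n (\<lambda>i k j. c i j k)"
  have s23: "c i j k = - c i k j" if "i\<in>{1..n}" "j\<in>{1..n}" "k\<in>{1..n}" for i j k
    using H that unfolding n_quadratic_family_def by blast
  have z: "c i i k = 0" if "i\<in>{1..n}" "k\<in>{1..n}" for i k
    using H that unfolding n_quadratic_family_def by blast
  have s12: "c i j k = - c j i k" if "i\<in>{1..n}" "j\<in>{1..n}" "k\<in>{1..n}" for i j k
  proof -
    have "i < j \<or> i = j \<or> j < i" by arith
    moreover have "i < j \<Longrightarrow> c i j k = - c j i k" using H that unfolding n_quadratic_family_def by blast
    moreover have "j < i \<Longrightarrow> c j i k = - c i j k" using H that unfolding n_quadratic_family_def by blast
    ultimately show ?thesis using z that by auto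
  qed
  have "alt n c" unfolding alt_def
  proof (intro ballI conjI)
    fix i j k assume ijk: "i\<in>{1..n}" "j\<in>{1..n}" "k\<in>{1..n}"
    show "c i j k = - c j i k" using s12 ijk by blast
    show "c i j k = c j k i" using s12[of i j k] s23[of j i k] ijk by simp
  qed
  moreover have "nzc n c" using H unfolding non_null_family_def nzc_def by blast
  ultimately show "alt n c \<and> nzc n c" by simp
next
  assume H: "alt n c \<and> nzc n c"
  have "n_quadratic_family n (\<lambda>i k j. c i j k)"
    unfolding n_quadratic_family_def
  proof (intro ballI conjI impI)
    fix i k j assume "i\<in>{1..n}" "k\<in>{1..n}" "j\<in>{1..n}"
    then show "c i j k = - c i k j" "c i i k = 0" using H alt_23 alt_ii by blast+
  next
    fix i j k assume "i\<in>{1..n}" "k\<in>{1..n}" "j\<in>{1..n}"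
    then show "c i j k = - c j i k" using H alt_12 by blast
  qed
  moreover have "non_null_family n (\<lambda>i k j. c i j k)"
    using H unfolding non_null_family_def nzc_def by blast
  ultimately show "n_quadratic_family n (\<lambda>i k j. c i j k) \<and> non_null_family n (\<lambda>i k j. c i j k)" ..
qed

lemma Bbasis_Bcar: "a \<in> {1..n} \<Longrightarrow> Bbasis a \<in> Bcar n"
  by (auto simp: Bbasis_def Bcar_def)
lemma wfun_basis: "a\<in>{1..n} \<Longrightarrow> b\<in>{1..n} \<Longrightarrow> k\<in>{1..n} \<Longrightarrow> wfun c n (Bbasis a) (Bbasis b) (Bbasis k) = c a b k"
  by (simp add: wfun_def Bbasis_def del: atLeastAtMost_iff)

lemma wfun_add1: "wfun c n (x + u) y z = wfun c n x y z + wfun c n u y z"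
  by (simp add: wfun_def distrib_right sum.distrib)
lemma wfun_add2: "wfun c n x (y + u) z = wfun c n x y z + wfun c n x u z"
  by (simp add: wfun_def distrib_right distrib_left sum.distrib)
lemma wfun_add3: "wfun c n x y (z + u) = wfun c n x y z + wfun c n x y u"
  by (simp add: wfun_def distrib_right distrib_left sum.distrib)
lemma wfun_sc1: "wfun c n (sc a x) y z = a * wfun c n x y z"
  by (simp add: wfun_def sc_def sum_distrib_left mult_ac)
lemma wfun_sc2: "wfun c n x (sc a y) z = a * wfun c n x y z"
  by (simp add: wfun_def sc_def sum_distrib_left mult_ac)
lemma wfun_sc3: "wfun c n x y (sc a z) = a * wfun c n x y z"
  by (simp add: wfun_def sc_def sum_distrib_left mult_ac)
lemma wfun_lin: "cocycle_abelian n (wfun c n) \<longleftrightarrow> (\<forall>x\<in>Bcar n. \<forall>y\<in>Bcar n. \<forall>z\<in>Bcar n. wfun c n x y z = - wfun c n y x z)"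
  unfolding cocycle_abelian_def
  by (simp add: wfun_add1 wfun_add2 wfun_add3 wfun_sc1 wfun_sc2 wfun_sc3)

lemma wfun_skew: assumes "alt n c" shows "wfun c n x y z = - wfun c n y x z"
proof -
  let ?S = "{1..n}"
  have "wfun c n y x z = (\<Sum>j\<in>?S. \<Sum>i\<in>?S. \<Sum>k\<in>?S. y j * x i * z k * c j i k)" by (simp add: wfun_def)
  also have "\<dots> = (\<Sum>i\<in>?S. \<Sum>j\<in>?S. \<Sum>k\<in>?S. y j * x i * z k * c j i k)" by (rule sum.swap)
  also have "\<dots> = (\<Sum>i\<in>?S. \<Sum>j\<in>?S. \<Sum>k\<in>?S. - (x i * y j * z k * c i j k))"
    apply (intro sum.cong refl)
    subgoal for i j k using alt_12[OF assms, of j i k] by (simp add: mult_ac)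
    done
  also have "\<dots> = - wfun c n x y z" by (simp add: wfun_def sum_negf)
  finally show ?thesis by simp
qed

lemma wfun_cyc1: assumes "alt n c" shows "wfun c n x y z = wfun c n z x y"
proof -
  let ?S = "{1..n}"
  have "wfun c n z x y = (\<Sum>k\<in>?S. \<Sum>i\<in>?S. \<Sum>j\<in>?S. z k * x i * y j * c k i j)" by (simp add: wfun_def)
  also have "\<dots> = (\<Sum>i\<in>?S. \<Sum>j\<in>?S. \<Sum>k\<in>?S. z k * x i * y j * c k i j)" by (rule sum_rot[symmetric])
  also have "\<dots> = (\<Sum>i\<in>?S. \<Sum>j\<in>?S. \<Sum>k\<in>?S. x i * y j * z k * c i j k)"
    apply (intro sum.cong refl)
    subgoal for i j k using alt_rot2[OF assms, of i j k] by (simp add: mult_ac)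
    done
  also have "\<dots> = wfun c n x y z" by (simp add: wfun_def)
  finally show ?thesis by simp
qed

lemma Pb_iff: fixes c :: "nat \<Rightarrow> nat \<Rightarrow> nat \<Rightarrow> 'a::field_char_0"
  shows "(nonzero_w n (wfun c n) \<and> cyclic_cocycle n (wfun c n)) \<longleftrightarrow> alt n c \<and> nzc n c"
proof
  assume H: "nonzero_w n (wfun c n) \<and> cyclic_cocycle n (wfun c n)"
  have sk: "\<forall>x\<in>Bcar n. \<forall>y\<in>Bcar n. \<forall>z\<in>Bcar n. wfun c n x y z = - wfun c n y x z"
    using H wfun_lin unfolding cyclic_cocycle_def by blast
  have cy: "\<forall>x\<in>Bcar n. \<forall>y\<in>Bcar n. \<forall>z\<in>Bcar n. wfun c n x y z = wfun c n z x y"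
    using H unfolding cyclic_cocycle_def by blast
  have "alt n c" unfolding alt_def
  proof (intro ballI conjI)
    fix i j k assume ijk: "i\<in>{1..n}" "j\<in>{1..n}" "k\<in>{1..n}"
    have "wfun c n (Bbasis i) (Bbasis j) (Bbasis k) = - wfun c n (Bbasis j) (Bbasis i) (Bbasis k)"
      using sk ijk Bbasis_Bcar by blast
    then show "c i j k = - c j i k" using ijk by (simp add: wfun_basis)
    have "wfun c n (Bbasis j) (Bbasis k) (Bbasis i) = wfun c n (Bbasis i) (Bbasis j) (Bbasis k)"
      using cy ijk Bbasis_Bcar by blast
    then show "c i j k = c j k i" using ijk by (simp add: wfun_basis)
  qed
  moreover have "nzc n c"
  proof -
    obtain x y z where xyz: "x\<in>Bcar n" "y\<in>Bcar n" "z\<in>Bcar n" "wfun c n x y z \<noteq> 0"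
      using H unfolding nonzero_w_def by blast
    then obtain i where "i\<in>{1..n}" "(\<Sum>j=1..n. \<Sum>k=1..n. x i * y j * z k * c i j k) \<noteq> 0"
      unfolding wfun_def by (meson sum.not_neutral_contains_not_neutral)
    then obtain j where "j\<in>{1..n}" "(\<Sum>k=1..n. x i * y j * z k * c i j k) \<noteq> 0" "i\<in>{1..n}"
      by (meson sum.not_neutral_contains_not_neutral)
    then obtain k where "k\<in>{1..n}" "x i * y j * z k * c i j k \<noteq> 0" "j\<in>{1..n}" "i\<in>{1..n}"
      by (meson sum.not_neutral_contains_not_neutral)
    then have "c i j k \<noteq> 0" by simp
    then show ?thesis unfolding nzc_def using \<open>i\<in>{1..n}\<close> \<open>j\<in>{1..n}\<close> \<open>k\<in>{1..n}\<close> by blast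
  qed
  ultimately show "alt n c \<and> nzc n c" by simp
next
  assume H: "alt n c \<and> nzc n c"
  have "nonzero_w n (wfun c n)"
  proof -
    obtain i j k where "i\<in>{1..n}" "j\<in>{1..n}" "k\<in>{1..n}" "c i j k \<noteq> 0" using H nzc_def by blast
    then show ?thesis unfolding nonzero_w_def
      by (intro bexI[of _ "Bbasis i"] bexI[of _ "Bbasis j"] bexI[of _ "Bbasis k"]) (auto simp: wfun_basis Bbasis_Bcar simp del: atLeastAtMost_iff)
  qed
  moreover have "cyclic_cocycle n (wfun c n)"
    unfolding cyclic_cocycle_def wfun_lin
  proof (intro conjI ballI)
    fix x y z :: "nat \<Rightarrow> 'a" assume "x \<in> Bcar n" "y \<in> Bcar n" "z \<in> Bcar n"
    show "wfun c n x y z = - wfun c n y x z" by (rule wfun_skew) (use H in blast)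
    show "wfun c n x y z = wfun c n z x y" by (rule wfun_cyc1) (use H in blast)
    show "wfun c n z x y = wfun c n y z x" by (rule wfun_cyc1) (use H in blast)
  qed
  ultimately show "nonzero_w n (wfun c n) \<and> cyclic_cocycle n (wfun c n)" ..
qed

lemma Lform_bvec_right: "k\<in>{1..n} \<Longrightarrow> Lform n u (bvec k) = u (Inr k)"
  by (simp add: Lform_def bvec_def del: atLeastAtMost_iff)
lemma Lform_bvec_left: "k\<in>{1..n} \<Longrightarrow> Lform n (bvec k) u = u (Inr k)"
  by (simp add: Lform_def bvec_def del: atLeastAtMost_iff)
lemma Lform_dvec_right: "k\<in>{1..n} \<Longrightarrow> Lform n u (dvec k) = u (Inl k)"
  by (simp add: Lform_def dvec_def del: atLeastAtMost_iff)

lemma Lform_add1: "Lform n (x + y) z = Lform n x z + Lform n y z"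
  unfolding Lform_def sum.distrib[symmetric] by (intro sum.cong refl) (simp add: algebra_simps)
lemma Lform_add2: "Lform n z (x + y) = Lform n z x + Lform n z y"
  unfolding Lform_def sum.distrib[symmetric] by (intro sum.cong refl) (simp add: algebra_simps)
lemma Lform_sc1: "Lform n (sc a x) y = a * Lform n x y"
  unfolding Lform_def sc_def sum_distrib_left by (intro sum.cong refl) (simp add: algebra_simps)
lemma Lform_sc2: "Lform n y (sc a x) = a * Lform n y x"
  unfolding Lform_def sc_def sum_distrib_left by (intro sum.cong refl) (simp add: algebra_simps)

lemma Lform_BL_left: "Lform n (BL n A x y) z = (\<Sum>m=1..n. \<Sum>i=1..n. \<Sum>j=1..n. x (Inl i) * y (Inl j) * z (Inl m) * A i j m)"
  unfolding Lform_def
  by (intro sum.cong refl) (simp add: BL_Inr sum_distrib_right sum_distrib_left mult_ac)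
lemma Lform_BL_right: "Lform n z (BL n A x y) = (\<Sum>m=1..n. \<Sum>i=1..n. \<Sum>j=1..n. x (Inl i) * y (Inl j) * z (Inl m) * A i j m)"
  unfolding Lform_def
  by (intro sum.cong refl) (simp add: BL_Inr sum_distrib_right sum_distrib_left mult_ac)

lemma BL_diag: fixes c :: "nat \<Rightarrow> nat \<Rightarrow> nat \<Rightarrow> 'a::field_char_0"
  assumes "alt n c" shows "BL n c x x = 0"
proof (rule ext)
  fix t show "BL n c x x t = 0 t"
  proof (cases t)
    case (Inr m)
    show ?thesis
    proof (cases "m \<in> {1..n}")
      case True
      let ?S = "{1..n}"
      let ?T = "(\<Sum>i\<in>?S. \<Sum>j\<in>?S. x (Inl i) * x (Inl j) * c i j m)"
      have "?T = (\<Sum>j\<in>?S. \<Sum>i\<in>?S. x (Inl i) * x (Inl j) * c i j m)" by (rule sum.swap)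
      also have "\<dots> = (\<Sum>i\<in>?S. \<Sum>j\<in>?S. - (x (Inl i) * x (Inl j) * c i j m))"
        apply (intro sum.cong refl)
        subgoal for i j using alt_12[OF assms, of j i m] True by (simp add: mult_ac)
        done
      also have "\<dots> = - ?T" by (simp add: sum_negf)
      finally have "?T = 0" using negself by blast
      then show ?thesis using Inr True by (simp add: BL_Inr)
    qed (use Inr in \<open>auto simp: BL_Inr\<close>)
  qed simp
qed

lemma BL_invariant: fixes c :: "nat \<Rightarrow> nat \<Rightarrow> nat \<Rightarrow> 'a::field_char_0"
  assumes "alt n c" shows "Lform n (BL n c x y) z + Lform n y (BL n c x z) = 0"
proof -
  let ?S = "{1..n}"
  have "Lform n y (BL n c x z) = (\<Sum>m\<in>?S. \<Sum>i\<in>?S. \<Sum>j\<in>?S. x (Inl i) * z (Inl j) * y (Inl m) * c i j m)"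
    by (rule Lform_BL_right)
  also have "\<dots> = (\<Sum>i\<in>?S. \<Sum>j\<in>?S. \<Sum>m\<in>?S. x (Inl i) * z (Inl j) * y (Inl m) * c i j m)"
    by (rule sum_rot[symmetric])
  also have "\<dots> = (\<Sum>i\<in>?S. \<Sum>m\<in>?S. \<Sum>j\<in>?S. x (Inl i) * z (Inl j) * y (Inl m) * c i j m)"
    by (rule sum.cong[OF refl]) (rule sum.swap)
  also have "\<dots> = (\<Sum>i\<in>?S. \<Sum>j\<in>?S. \<Sum>m\<in>?S. - (x (Inl i) * y (Inl j) * z (Inl m) * c i j m))"
    apply (intro sum.cong refl)
    subgoal for i j m using alt_23[OF assms, of i m j] by (simp add: mult_ac)
    done
  also have "\<dots> = - (\<Sum>m\<in>?S. \<Sum>i\<in>?S. \<Sum>j\<in>?S. x (Inl i) * y (Inl j) * z (Inl m) * c i j m)"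
    using sum_rot[of "\<lambda>i j m. x (Inl i) * y (Inl j) * z (Inl m) * c i j m" ?S ?S ?S] by (simp add: sum_negf)
  also have "\<dots> = - Lform n (BL n c x y) z" by (simp add: Lform_BL_left)
  finally show ?thesis by simp
qed

lemma Acar_add: "x \<in> Acar n \<Longrightarrow> y \<in> Acar n \<Longrightarrow> x + y \<in> Acar n"
  by (auto simp: Acar_def)

lemma Lform_nd: fixes x :: "nat+nat \<Rightarrow> 'a::field"
  assumes x: "x \<in> Acar n" and h: "\<forall>y\<in>Acar n. Lform n x y = 0" shows "x = 0"
proof (rule ext)
  fix t
  show "x t = 0 t"
  proof (cases t)
    case (Inl i)
    show ?thesis
    proof (cases "i \<in> {1..n}")
      case True
      have "Lform n x (dvec i) = 0" using h dvec_Acar[OF True] by blast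
      then show ?thesis using Lform_dvec_right[OF True, of x] Inl by simp
    next
      case False then have "i < 1 \<or> n < i" by auto
      then show ?thesis using x Inl unfolding Acar_def mem_Collect_eq zero_fun_apply by blast
    qed
  next
    case (Inr i)
    show ?thesis
    proof (cases "i \<in> {1..n}")
      case True
      have "Lform n x (bvec i) = 0" using h bvec_Acar[OF True] by blast
      then show ?thesis using Lform_bvec_right[OF True, of x] Inr by simp
    next
      case False then have "i < 1 \<or> n < i" by auto
      then show ?thesis using x Inr unfolding Acar_def mem_Collect_eq zero_fun_apply by blast
    qed
  qed
qed

lemma Pa_iff: fixes c :: "nat \<Rightarrow> nat \<Rightarrow> nat \<Rightarrow> 'a::field_char_0"
  shows "(quadratic_lie_algebra (Acar n) (BL n c) (Lform n) \<and> two_step_nilpotent (Acar n) (BL n c))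
         \<longleftrightarrow> alt n c \<and> nzc n c"
proof
  assume H: "quadratic_lie_algebra (Acar n) (BL n c) (Lform n) \<and> two_step_nilpotent (Acar n) (BL n c)"
  have diag: "\<forall>x\<in>Acar n. BL n c x x = 0" using H unfolding quadratic_lie_algebra_def lie_algebra_on_def by blast
  have inv: "\<forall>x\<in>Acar n. \<forall>y\<in>Acar n. \<forall>z\<in>Acar n. Lform n (BL n c x y) z + Lform n y (BL n c x z) = 0"
    using H unfolding quadratic_lie_algebra_def by blast
  have s23: "c i j k = - c i k j" if ijk: "i\<in>{1..n}" "j\<in>{1..n}" "k\<in>{1..n}" for i j k
  proof -
    have "Lform n (BL n c (bvec i) (bvec j)) (bvec k) + Lform n (bvec j) (BL n c (bvec i) (bvec k)) = 0"
      using inv bvec_Acar ijk by blast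
    then show ?thesis using ijk by (simp add: Lform_bvec_right Lform_bvec_left BL_basis eq_neg_iff_add_eq_0)
  qed
  have s12: "c i j k = - c j i k" if ijk: "i\<in>{1..n}" "j\<in>{1..n}" "k\<in>{1..n}" for i j k
  proof -
    have ii: "c a a k = 0" if "a\<in>{1..n}" for a
    proof -
      have "BL n c (bvec a) (bvec a) = 0" using diag bvec_Acar[OF that] by blast
      then have "BL n c (bvec a) (bvec a) (Inr k) = 0" by simp
      then show ?thesis using that ijk by (simp add: BL_basis)
    qed
    have "BL n c (bvec i + bvec j) (bvec i + bvec j) (Inr k) = 0"
      using diag bvec_Acar Acar_add ijk by (metis zero_fun_apply)
    then have "c i i k + c j i k + (c i j k + c j j k) = 0"
      using ijk by (simp add: BL_add_left BL_add_right BL_basis)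
    then have "c j i k + c i j k = 0" using ii ijk by simp
    then show ?thesis by (simp add: eq_neg_iff_add_eq_0 add.commute)
  qed
  have "alt n c" unfolding alt_def
  proof (intro ballI conjI)
    fix i j k assume ijk: "i\<in>{1..n}" "j\<in>{1..n}" "k\<in>{1..n}"
    show "c i j k = - c j i k" using s12 ijk by blast
    show "c i j k = c j k i" using s12[of i j k] s23[of j i k] ijk by simp
  qed
  moreover have "nzc n c"
  proof -
    obtain x y where xy: "x \<in> Acar n" "y \<in> Acar n" "BL n c x y \<noteq> 0"
      using H unfolding two_step_nilpotent_def by blast
    then obtain t where t: "BL n c x y t \<noteq> 0" by (auto simp: fun_eq_iff)
    then obtain m where m: "t = Inr m" by (cases t) auto
    with t have mS: "m \<in> {1..n}" and "(\<Sum>i=1..n. \<Sum>j=1..n. x (Inl i) * y (Inl j) * c i j m) \<noteq> 0"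
      by (auto simp: BL_Inr split: if_splits)
    then obtain i where "i\<in>{1..n}" "(\<Sum>j=1..n. x (Inl i) * y (Inl j) * c i j m) \<noteq> 0"
      by (meson sum.not_neutral_contains_not_neutral)
    then obtain j where "j\<in>{1..n}" "x (Inl i) * y (Inl j) * c i j m \<noteq> 0" "i\<in>{1..n}"
      by (meson sum.not_neutral_contains_not_neutral)
    then have "c i j m \<noteq> 0" "j\<in>{1..n}" "i\<in>{1..n}" by auto
    then show ?thesis unfolding nzc_def using mS by blast
  qed
  ultimately show "alt n c \<and> nzc n c" by simp
next
  assume H: "alt n c \<and> nzc n c"
  have sub: "subspace_c (Acar n)" by (auto simp: subspace_c_def Acar_def sc_def)
  have lie: "lie_algebra_on (Acar n) (BL n c)"
    unfolding lie_algebra_on_def bilinear_map_on_def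
    using sub BL_Acar BL_diag[of n c] H
    by (simp add: BL_add_left BL_add_right BL_sc_left BL_sc_right BL_zero_right BL_Acar)
  have bf: "bilinear_form_on (Acar n) (Lform n)"
    unfolding bilinear_form_on_def
    using Lform_add1 Lform_add2 Lform_sc1 Lform_sc2 by blast
  have sym: "\<forall>x\<in>Acar n. \<forall>y\<in>Acar n. Lform n x y = Lform n y x"
    by (simp add: Lform_def add.commute)
  have nd: "\<forall>x\<in>Acar n. (\<forall>y\<in>Acar n. Lform n x y = 0) \<longrightarrow> x = 0"
    using Lform_nd by blast
  have inv: "\<forall>x\<in>Acar n. \<forall>y\<in>Acar n. \<forall>z\<in>Acar n. Lform n (BL n c x y) z + Lform n y (BL n c x z) = 0"
    using BL_invariant H by blast
  have q: "quadratic_lie_algebra (Acar n) (BL n c) (Lform n)"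
    unfolding quadratic_lie_algebra_def using lie bf sym nd inv by blast
  have t: "two_step_nilpotent (Acar n) (BL n c)"
    unfolding two_step_nilpotent_def
  proof
    show "\<forall>x\<in>Acar n. \<forall>y\<in>Acar n. \<forall>z\<in>Acar n. BL n c x (BL n c y z) = 0"
      by (simp add: BL_zero_right)
    obtain i j k where ijk: "i\<in>{1..n}" "j\<in>{1..n}" "k\<in>{1..n}" "c i j k \<noteq> 0" using H nzc_def by blast
    then have "BL n c (bvec i) (bvec j) \<noteq> 0" by (metis BL_basis zero_fun_apply)
    then show "\<exists>x\<in>Acar n. \<exists>y\<in>Acar n. BL n c x y \<noteq> 0" using ijk bvec_Acar by blast
  qed
  show "quadratic_lie_algebra (Acar n) (BL n c) (Lform n) \<and> two_step_nilpotent (Acar n) (BL n c)"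
    using q t by simp
qed

section \<open>(c) closed forms\<close>

definition Ec :: "(nat \<Rightarrow> nat \<Rightarrow> nat \<Rightarrow> 'a::field) \<Rightarrow> nat \<Rightarrow> nat \<Rightarrow> nat \<Rightarrow> 'a" where
  "Ec c i j m = (if m < i \<and> j < i then c i j m else 0) - (if m < j \<and> i < j then c j i m else 0)
     + (if i < m \<and> j < m then c m i j else 0)"

definition FL :: "nat \<Rightarrow> (nat + nat \<Rightarrow> 'a::field) \<Rightarrow> (nat + nat \<Rightarrow> 'a) \<Rightarrow> 'a" where
  "FL k x y = (\<Sum>i=1..k. x (Inl i) * y (Inr i) + y (Inl i) * x (Inr i))"

lemma proj_Inl: "proj k x (Inl i) = (if 1 \<le> i \<and> i \<le> k then x (Inl i) else 0)"
  by (simp add: proj_def)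
lemma proj_Inr: "proj k x (Inr i) = (if 1 \<le> i \<and> i \<le> k then x (Inr i) else 0)"
  by (simp add: proj_def)

lemma dmap_Inl[simp]: "dmap c k v (Inl i) = 0" by (simp add: dmap_def)
lemma dmap_Inr: "dmap c k v (Inr m) = (if 1 \<le> m \<and> m \<le> k then (\<Sum>j=1..k. v (Inl j) * c (Suc k) j m) else 0)"
  by (simp add: dmap_def)
lemma dmap_proj: "dmap c k (proj k y) = dmap c k y"
  by (auto simp: dmap_def fun_eq_iff proj_Inl split: sum.split intro!: sum.cong)
lemma BL_proj: "BL k A (proj k x) (proj k y) = BL k A x y"
  by (auto simp: BL_def fun_eq_iff proj_Inl split: sum.split intro!: sum.cong)
lemma FL_proj: "FL k (proj k x) (proj k y) = FL k x y"
  by (auto simp: FL_def proj_Inl proj_Inr intro!: sum.cong)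
lemma FL_dmap: "FL k (dmap c k x) y = (\<Sum>i=1..k. y (Inl i) * (\<Sum>j=1..k. x (Inl j) * c (Suc k) j i))"
  by (auto simp: FL_def dmap_Inr intro!: sum.cong)

lemma chain_f_closed: "chain_f (dmap c) k = FL k"
proof (induction k)
  case 0 show ?case by (simp add: FL_def fun_eq_iff)
next
  case (Suc k)
  show ?case
    by (simp add: Suc dext_f_def FL_proj fun_eq_iff) (simp add: FL_def algebra_simps)
qed

lemma sum_sq_Suc: "(\<Sum>i=1..Suc k. \<Sum>j=1..Suc k. f i j) =
   (\<Sum>i=1..k. \<Sum>j=1..k. f i j) + (\<Sum>i=1..k. f i (Suc k)) + (\<Sum>j=1..k. f (Suc k) j) + f (Suc k) (Suc k)"
  by (simp add: sum.distrib algebra_simps)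

lemma ring3: "(a::'a::ab_group_add) - b + s = s - b + a" by (simp add: algebra_simps)

lemma chain_br_closed: "chain_br (dmap c) k = BL k (Ec c)"
proof (induction k)
  case 0 show ?case by (simp add: BL_def fun_eq_iff split: sum.split)
next
  case (Suc k)
  show ?case
  proof (intro ext)
    fix x y :: "nat + nat \<Rightarrow> 'a" and t
    let ?E = "Ec c"
    have L: "chain_br (dmap c) (Suc k) x y t =
       x (Inl (Suc k)) * dmap c k y t - y (Inl (Suc k)) * dmap c k x t + BL k ?E x y t
       + FL k (dmap c k x) y * dvec (Suc k) t"
      by (simp add: Suc chain_f_closed dext_br_def Let_def sc_def dmap_proj BL_proj)
         (simp add: FL_def proj_Inl proj_Inr dmap_Inr)
    show "chain_br (dmap c) (Suc k) x y t = BL (Suc k) ?E x y t"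
    proof (cases t)
      case (Inl i) then show ?thesis using L by (simp add: dvec_def)
    next
      case (Inr m)
      consider "1 \<le> m \<and> m \<le> k" | "m = Suc k" | "m = 0 \<or> Suc k < m" by linarith
      then show ?thesis
      proof cases
        case 1
        have e1: "?E i (Suc k) m = - c (Suc k) i m" if "i \<in> {1..k}" for i using 1 that by (simp add: Ec_def)
        have e2: "?E (Suc k) j m = c (Suc k) j m" if "j \<in> {1..k}" for j using 1 that by (simp add: Ec_def)
        have e3: "?E (Suc k) (Suc k) m = 0" using 1 by (simp add: Ec_def)
        have "BL (Suc k) ?E x y t = (\<Sum>i=1..k. \<Sum>j=1..k. x (Inl i) * y (Inl j) * ?E i j m)
            + (\<Sum>i=1..k. x (Inl i) * y (Inl (Suc k)) * ?E i (Suc k) m)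
            + (\<Sum>j=1..k. x (Inl (Suc k)) * y (Inl j) * ?E (Suc k) j m)
            + x (Inl (Suc k)) * y (Inl (Suc k)) * ?E (Suc k) (Suc k) m"
          using Inr 1 by (simp only: BL_Inr sum_sq_Suc) simp
        also have "\<dots> = (\<Sum>i=1..k. \<Sum>j=1..k. x (Inl i) * y (Inl j) * ?E i j m)
            - y (Inl (Suc k)) * (\<Sum>i=1..k. x (Inl i) * c (Suc k) i m)
            + x (Inl (Suc k)) * (\<Sum>j=1..k. y (Inl j) * c (Suc k) j m)"
          using e1 e2 e3 by (simp add: sum_distrib_left sum_negf mult_ac)
        finally have R: "BL (Suc k) ?E x y t = (\<Sum>i=1..k. \<Sum>j=1..k. x (Inl i) * y (Inl j) * ?E i j m)
            - y (Inl (Suc k)) * (\<Sum>i=1..k. x (Inl i) * c (Suc k) i m)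
            + x (Inl (Suc k)) * (\<Sum>j=1..k. y (Inl j) * c (Suc k) j m)" .
        have L2: "chain_br (dmap c) (Suc k) x y t = x (Inl (Suc k)) * (\<Sum>j=1..k. y (Inl j) * c (Suc k) j m)
            - y (Inl (Suc k)) * (\<Sum>i=1..k. x (Inl i) * c (Suc k) i m)
            + (\<Sum>i=1..k. \<Sum>j=1..k. x (Inl i) * y (Inl j) * ?E i j m)"
          using L Inr 1 by (simp add: BL_Inr dmap_Inr dvec_def)
        show ?thesis unfolding R L2 by (rule ring3)
      next
        case 2
        have e1: "?E i j m = c (Suc k) i j" if "i \<in> {1..k}" "j \<in> {1..k}" for i j using 2 that by (simp add: Ec_def)
        have e2: "?E i (Suc k) m = 0" if "i \<in> {1..k}" for i using 2 that by (simp add: Ec_def)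
        have e3: "?E (Suc k) j m = 0" if "j \<in> {1..k}" for j using 2 that by (simp add: Ec_def)
        have e4: "?E (Suc k) (Suc k) m = 0" using 2 by (simp add: Ec_def)
        have "BL (Suc k) ?E x y t = (\<Sum>i=1..k. \<Sum>j=1..k. x (Inl i) * y (Inl j) * ?E i j m)
            + (\<Sum>i=1..k. x (Inl i) * y (Inl (Suc k)) * ?E i (Suc k) m)
            + (\<Sum>j=1..k. x (Inl (Suc k)) * y (Inl j) * ?E (Suc k) j m)
            + x (Inl (Suc k)) * y (Inl (Suc k)) * ?E (Suc k) (Suc k) m"
          using Inr 2 by (simp only: BL_Inr sum_sq_Suc) simp
        also have "\<dots> = (\<Sum>i=1..k. \<Sum>j=1..k. x (Inl i) * y (Inl j) * c (Suc k) i j)"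
          using e1 e2 e3 e4 by simp
        also have "\<dots> = (\<Sum>j=1..k. \<Sum>i=1..k. x (Inl i) * y (Inl j) * c (Suc k) i j)"
          by (rule sum.swap)
        also have "\<dots> = FL k (dmap c k x) y"
          by (simp add: FL_dmap sum_distrib_left mult_ac)
        finally show ?thesis using L Inr 2 by (simp add: BL_Inr dmap_Inr dvec_def)
      next
        case 3
        then show ?thesis using L Inr by (auto simp: BL_Inr dmap_Inr dvec_def)
      qed
    qed
  qed
qed

lemma FL_sym: "FL k x y = FL k y x"
  unfolding FL_def by (intro sum.cong refl) (simp add: algebra_simps)

lemma FL_Lform: "FL n = Lform n"
  unfolding FL_def Lform_def fun_eq_iff by (intro allI sum.cong refl) (simp add: algebra_simps)

lemma TwoSP_dmap: "TwoSP n (dmap c)"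
  unfolding TwoSP_def
proof (intro allI impI conjI ballI)
  fix k and x :: "nat + nat \<Rightarrow> 'a" assume "1 \<le> k \<and> k < n" "x \<in> Acar k"
  show "dmap c k x \<in> A2car k" by (auto simp: A2car_def dmap_Inr)
next
  fix k and x :: "nat + nat \<Rightarrow> 'a" assume "1 \<le> k \<and> k < n" "x \<in> A2car k"
  then show "dmap c k x = 0" by (auto simp: A2car_def dmap_def fun_eq_iff split: sum.split)
qed

lemma dmap_Acar: "dmap c k x \<in> Acar k" by (auto simp: Acar_def dmap_Inr)
lemma dmap_add: "dmap c k (x + y) = dmap c k x + dmap c k y"
  by (auto simp: dmap_def fun_eq_iff distrib_right sum.distrib split: sum.split)
lemma dmap_sc: "dmap c k (sc a x) = sc a (dmap c k x)"
  by (auto simp: dmap_def sc_def fun_eq_iff sum_distrib_left mult_ac split: sum.split)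
lemma dmap_zero: "(\<And>i. v (Inl i) = 0) \<Longrightarrow> dmap c k v = 0"
  by (auto simp: dmap_def fun_eq_iff split: sum.split)

lemma dmap_bvec: "j \<in> {1..k} \<Longrightarrow> m \<in> {1..k} \<Longrightarrow> dmap c k (bvec j) (Inr m) = c (Suc k) j m"
  by (simp add: dmap_Inr bvec_def del: atLeastAtMost_iff) auto

lemma FL_skew_sum: "FL k (dmap c k x) y + FL k x (dmap c k y) =
   (\<Sum>i=1..k. \<Sum>j=1..k. y (Inl i) * x (Inl j) * (c (Suc k) j i + c (Suc k) i j))"
proof -
  let ?S = "{1..k}"
  have "FL k x (dmap c k y) = (\<Sum>i\<in>?S. x (Inl i) * (\<Sum>j\<in>?S. y (Inl j) * c (Suc k) j i))"
    by (subst FL_sym) (rule FL_dmap)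
  also have "\<dots> = (\<Sum>i\<in>?S. \<Sum>j\<in>?S. x (Inl i) * y (Inl j) * c (Suc k) j i)"
    by (simp add: sum_distrib_left mult_ac)
  also have "\<dots> = (\<Sum>j\<in>?S. \<Sum>i\<in>?S. x (Inl i) * y (Inl j) * c (Suc k) j i)"
    by (rule sum.swap)
  finally have 2: "FL k x (dmap c k y) = (\<Sum>i\<in>?S. \<Sum>j\<in>?S. x (Inl j) * y (Inl i) * c (Suc k) i j)" .
  have 1: "FL k (dmap c k x) y = (\<Sum>i\<in>?S. \<Sum>j\<in>?S. y (Inl i) * x (Inl j) * c (Suc k) j i)"
    by (simp add: FL_dmap sum_distrib_left mult_ac)
  show ?thesis unfolding 1 2 sum.distrib[symmetric] by (simp add: algebra_simps)
qed

definition skewP :: "nat \<Rightarrow> (nat \<Rightarrow> nat \<Rightarrow> nat \<Rightarrow> 'a::field) \<Rightarrow> bool" where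
  "skewP n c \<longleftrightarrow> (\<forall>k<n. \<forall>j\<in>{1..k}. \<forall>m\<in>{1..k}. c (Suc k) j m + c (Suc k) m j = 0)"

lemma is_chain_iff: "is_chain n (dmap c) \<longleftrightarrow> skewP n c"
proof
  assume H: "is_chain n (dmap c)"
  show "skewP n c" unfolding skewP_def
  proof (intro allI impI ballI)
    fix k j m assume k: "k < n" and j: "j \<in> {1..k}" and m: "m \<in> {1..k}"
    have "FL k (dmap c k (bvec j)) (bvec m) + FL k (bvec j) (dmap c k (bvec m)) = 0"
      using H k bvec_Acar[OF j] bvec_Acar[OF m] unfolding is_chain_def chain_f_closed by blast
    then have "(\<Sum>i=1..k. \<Sum>l=1..k. bvec m (Inl i) * bvec j (Inl l) * (c (Suc k) l i + c (Suc k) i l)) = (0::'a)"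
      by (simp only: FL_skew_sum)
    then show "c (Suc k) j m + c (Suc k) m j = 0"
      using j m by (simp add: bvec_def del: atLeastAtMost_iff)
  qed
next
  assume H: "skewP n c"
  show "is_chain n (dmap c)" unfolding is_chain_def chain_f_closed chain_br_closed
  proof (intro allI impI conjI ballI)
    fix k and x :: "nat + nat \<Rightarrow> 'a" assume "k < n" "x \<in> Acar k"
    show "dmap c k x \<in> Acar k" by (rule dmap_Acar)
  next
    fix k and x y :: "nat + nat \<Rightarrow> 'a" and a :: 'a
    show "dmap c k (x + y) = dmap c k x + dmap c k y" by (rule dmap_add)
    show "dmap c k (sc a x) = sc a (dmap c k x)" by (rule dmap_sc)
  next
    fix k and x y :: "nat + nat \<Rightarrow> 'a" assume k: "k < n" and "x \<in> Acar k" "y \<in> Acar k"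
    have "(\<Sum>i=1..k. \<Sum>j=1..k. y (Inl i) * x (Inl j) * (c (Suc k) j i + c (Suc k) i j)) = 0"
      using H k unfolding skewP_def by (intro sum.neutral ballI) simp
    then show "FL k (dmap c k x) y + FL k x (dmap c k y) = 0" by (simp add: FL_skew_sum)
  next
    fix k and x y :: "nat + nat \<Rightarrow> 'a" assume "k < n" "x \<in> Acar k" "y \<in> Acar k"
    show "dmap c k (BL k (Ec c) x y) = BL k (Ec c) (dmap c k x) y + BL k (Ec c) x (dmap c k y)"
      by (simp add: dmap_zero BL_zero_left BL_zero_right)
  qed
qed

lemma alt_skewP: fixes c :: "nat \<Rightarrow> nat \<Rightarrow> nat \<Rightarrow> 'a::field_char_0"
  shows "alt n c \<Longrightarrow> skewP n c"
  unfolding skewP_def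
proof (intro allI impI ballI)
  fix k j m assume "alt n c" "k < n" "j \<in> {1..k}" "m \<in> {1..k}"
  then have "c (Suc k) j m = - c (Suc k) m j" by (intro alt_23) auto
  then show "c (Suc k) j m + c (Suc k) m j = 0" by simp
qed

lemma NNP_nzc: "NNP n (dmap c) \<Longrightarrow> nzc n c"
proof -
  assume "NNP n (dmap c)"
  then obtain k x where k: "k < n" "x \<in> Acar k" "dmap c k x \<noteq> 0" unfolding NNP_def by blast
  then obtain t where t: "dmap c k x t \<noteq> 0" by (auto simp: fun_eq_iff)
  then obtain m where m: "t = Inr m" by (cases t) auto
  with t have mS: "m \<in> {1..k}" and "(\<Sum>j=1..k. x (Inl j) * c (Suc k) j m) \<noteq> 0"
    by (auto simp: dmap_Inr split: if_splits)
  then obtain j where "j\<in>{1..k}" "x (Inl j) * c (Suc k) j m \<noteq> 0"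
    by (meson sum.not_neutral_contains_not_neutral)
  then have "c (Suc k) j m \<noteq> 0" "j\<in>{1..n}" "Suc k \<in> {1..n}" "m \<in> {1..n}" using k mS by auto
  then show "nzc n c" unfolding nzc_def by blast
qed

lemma nzc_NNP: fixes c :: "nat \<Rightarrow> nat \<Rightarrow> nat \<Rightarrow> 'a::field_char_0"
  assumes A: "alt n c" and N: "nzc n c" shows "NNP n (dmap c)"
proof -
  obtain a b e where abe: "a\<in>{1..n}" "b\<in>{1..n}" "e\<in>{1..n}" "c a b e \<noteq> 0" using N nzc_def by blast
  have "a \<noteq> b" using abe alt_ii[OF A] by metis
  have "b \<noteq> e" using abe alt_jj[OF A] by metis
  have "a \<noteq> e" using abe alt_rot[OF A, of a b a] alt_jj[OF A, of b a] by auto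
  have "\<exists>p j m. p \<in> {1..n} \<and> 1 \<le> j \<and> j < p \<and> 1 \<le> m \<and> m < p \<and> c p j m \<noteq> 0"
  proof -
    consider "b < a \<and> e < a" | "a < b \<and> e < b" | "a < e \<and> b < e"
      using \<open>a \<noteq> b\<close> \<open>b \<noteq> e\<close> \<open>a \<noteq> e\<close> by linarith
    then show ?thesis
    proof cases
      case 1 then show ?thesis using abe by (intro exI[of _ a] exI[of _ b] exI[of _ e]) auto
    next
      case 2
      have "c b e a = c a b e" using alt_rot[OF A, of a b e] abe by simp
      then show ?thesis using 2 abe by (intro exI[of _ b] exI[of _ e] exI[of _ a]) auto
    next
      case 3
      have "c e a b = c a b e" using alt_rot2[OF A, of a b e] abe by simp
      then show ?thesis using 3 abe by (intro exI[of _ e] exI[of _ a] exI[of _ b]) auto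
    qed
  qed
  then obtain p j m where pjm: "p \<in> {1..n}" "1 \<le> j" "j < p" "1 \<le> m" "m < p" "c p j m \<noteq> 0" by blast
  define k where "k = p - 1"
  have kk: "Suc k = p" "k < n" "j \<in> {1..k}" "m \<in> {1..k}" using pjm by (auto simp: k_def)
  have "dmap c k (bvec j) (Inr m) \<noteq> 0" using dmap_bvec[of j k m c] kk pjm by simp
  then have "dmap c k (bvec j) \<noteq> 0" by auto
  moreover have "bvec j \<in> Acar k" using kk bvec_Acar by blast
  ultimately show ?thesis unfolding NNP_def using kk by blast
qed

lemma chain_alt: fixes c :: "nat \<Rightarrow> nat \<Rightarrow> nat \<Rightarrow> 'a::field_char_0"
  assumes E: "\<forall>a\<in>{1..n}. \<forall>b\<in>{1..n}. \<forall>m\<in>{1..n}. Ec c a b m = c a b m" and S: "skewP n c"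
  shows "alt n c"
proof -
  have E': "c a b m = (if m < a \<and> b < a then c a b m else 0) - (if m < b \<and> a < b then c b a m else 0)
     + (if a < m \<and> b < m then c m a b else 0)" if "a\<in>{1..n}" "b\<in>{1..n}" "m\<in>{1..n}" for a b m
  proof -
    have "Ec c a b m = c a b m" using E that by blast
    from this[symmetric] show ?thesis unfolding Ec_def .
  qed
  have S': "c p j m = - c p m j" if "p\<in>{1..n}" "j\<in>{1..n}" "m\<in>{1..n}" "j < p" "m < p" for p j m
  proof -
    have "p - 1 < n" "j \<in> {1..p-1}" "m \<in> {1..p-1}" and pp: "Suc (p - 1) = p" using that by auto
    then have "c (Suc (p-1)) j m + c (Suc (p-1)) m j = 0" using S unfolding skewP_def by blast
    then have "c p j m + c p m j = 0" unfolding pp .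
    then show ?thesis by (simp add: eq_neg_iff_add_eq_0)
  qed
  have Z1: "c p j j = 0" if "p\<in>{1..n}" "j\<in>{1..n}" "j < p" for p j
    using S'[OF that(1,2,2,3,3)] negself by metis
  have A0: "c a a m = 0" if "a\<in>{1..n}" "m\<in>{1..n}" for a m
    using E'[OF that(1,1,2)] Z1[OF that(2,1)] by (auto split: if_splits)
  have A1: "c a b m = - c b a m" if "a\<in>{1..n}" "b\<in>{1..n}" "m\<in>{1..n}" "b < a" for a b m
  proof -
    consider "m < a" | "m = a" | "a < m" by linarith
    then show ?thesis
    proof cases
      case 1 then show ?thesis using E'[OF that(2,1,3)] that by simp
    next
      case 2 then show ?thesis using E'[OF that(1,2,3)] E'[OF that(2,1,3)] that by simp
    next
      case 3 then show ?thesis using E'[OF that(1,2,3)] E'[OF that(2,1,3)] S'[OF that(3,1,2)] that by simp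
    qed
  qed
  have A: "c a b m = - c b a m" if "a\<in>{1..n}" "b\<in>{1..n}" "m\<in>{1..n}" for a b m
  proof -
    consider "b < a" | "a = b" | "a < b" by linarith
    then show ?thesis
    proof cases
      case 1 show ?thesis by (rule A1[OF that 1])
    next
      case 2 then show ?thesis using A0 that by simp
    next
      case 3 then show ?thesis using A1[OF that(2,1,3)] by simp
    qed
  qed
  have B1: "c a b m = - c a m b" if "a\<in>{1..n}" "b\<in>{1..n}" "m\<in>{1..n}" "m < b" for a b m
  proof -
    consider "b < a" | "a = b" | "a < b" by linarith
    then show ?thesis
    proof cases
      case 1 show ?thesis by (rule S'[OF that(1,2,3) 1 less_trans[OF that(4) 1]])
    next
      case 2 then show ?thesis using A0[OF that(1,3)] E'[OF that(1,3,1)] that by simp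
    next
      case 3 then show ?thesis using E'[OF that(1,2,3)] E'[OF that(1,3,2)] that by simp
    qed
  qed
  have B: "c a b m = - c a m b" if "a\<in>{1..n}" "b\<in>{1..n}" "m\<in>{1..n}" for a b m
  proof -
    consider "m < b" | "b = m" | "b < m" by linarith
    then show ?thesis
    proof cases
      case 1 show ?thesis by (rule B1[OF that 1])
    next
      case 2
      have "c a b b = 0"
      proof (cases "b < a")
        case True show ?thesis by (rule Z1[OF that(1,2) True])
      next
        case False then show ?thesis using E'[OF that(1,2,2)] by simp
      qed
      then show ?thesis using 2 by simp
    next
      case 3 then show ?thesis using B1[OF that(1,3,2)] by simp
    qed
  qed
  show ?thesis unfolding alt_def
  proof (intro ballI conjI)
    fix i j k assume ijk: "i\<in>{1..n}" "j\<in>{1..n}" "k\<in>{1..n}"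
    show "c i j k = - c j i k" using A ijk by blast
    show "c i j k = c j k i" using A[OF ijk] B[of j i k] ijk by simp
  qed
qed

lemma alt_Ec: fixes c :: "nat \<Rightarrow> nat \<Rightarrow> nat \<Rightarrow> 'a::field_char_0"
  assumes A: "alt n c" and abm: "a\<in>{1..n}" "b\<in>{1..n}" "m\<in>{1..n}"
  shows "Ec c a b m = c a b m"
proof -
  consider "b < a \<and> m < a" | "a < b \<and> m < b" | "a < m \<and> b < m" | "a = b" | "a = m" | "b = m" by linarith
  then show ?thesis
  proof cases
    case 1 then show ?thesis by (simp add: Ec_def)
  next
    case 2 then show ?thesis using alt_12[OF A abm] by (simp add: Ec_def)
  next
    case 3 then show ?thesis using alt_rot2[OF A abm] by (simp add: Ec_def)
  next
    case 4 then show ?thesis using alt_ii[OF A, of a m] alt_jj[OF A, of m a] abm by (simp add: Ec_def)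
  next
    case 5 then show ?thesis using alt_rot[OF A abm] alt_jj[OF A, of b a] abm by (simp add: Ec_def)
  next
    case 6 then show ?thesis using alt_jj[OF A, of a b] abm by (simp add: Ec_def)
  qed
qed

lemma Pc_iff: fixes c :: "nat \<Rightarrow> nat \<Rightarrow> nat \<Rightarrow> 'a::field_char_0"
  shows "(is_chain n (dmap c) \<and> NNP n (dmap c) \<and> TwoSP n (dmap c) \<and>
          (\<forall>x\<in>Acar n. \<forall>y\<in>Acar n. chain_br (dmap c) n x y = BL n c x y \<and>
                              chain_f (dmap c) n x y = Lform n x y))
         \<longleftrightarrow> alt n c \<and> nzc n c"
proof -
  have "(\<forall>x\<in>Acar n. \<forall>y\<in>Acar n. chain_br (dmap c) n x y = BL n c x y \<and>
                              chain_f (dmap c) n x y = Lform n x y)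
        \<longleftrightarrow> (\<forall>x\<in>Acar n. \<forall>y\<in>Acar n. BL n (Ec c) x y = BL n c x y)"
    by (simp add: chain_br_closed chain_f_closed FL_Lform)
  also have "\<dots> \<longleftrightarrow> (\<forall>a\<in>{1..n}. \<forall>b\<in>{1..n}. \<forall>m\<in>{1..n}. Ec c a b m = c a b m)"
    by (rule BL_eq_iff)
  finally have X: "(\<forall>x\<in>Acar n. \<forall>y\<in>Acar n. chain_br (dmap c) n x y = BL n c x y \<and>
                              chain_f (dmap c) n x y = Lform n x y)
        \<longleftrightarrow> (\<forall>a\<in>{1..n}. \<forall>b\<in>{1..n}. \<forall>m\<in>{1..n}. Ec c a b m = c a b m)" .
  show ?thesis
  proof
    assume H: "is_chain n (dmap c) \<and> NNP n (dmap c) \<and> TwoSP n (dmap c) \<and>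
          (\<forall>x\<in>Acar n. \<forall>y\<in>Acar n. chain_br (dmap c) n x y = BL n c x y \<and>
                              chain_f (dmap c) n x y = Lform n x y)"
    have "alt n c" using chain_alt H X is_chain_iff by blast
    moreover have "nzc n c" using H NNP_nzc by blast
    ultimately show "alt n c \<and> nzc n c" ..
  next
    assume H: "alt n c \<and> nzc n c"
    have "is_chain n (dmap c)" using H alt_skewP is_chain_iff by blast
    moreover have "NNP n (dmap c)" using H nzc_NNP by blast
    moreover have "\<forall>a\<in>{1..n}. \<forall>b\<in>{1..n}. \<forall>m\<in>{1..n}. Ec c a b m = c a b m" using H alt_Ec by blast
    ultimately show "is_chain n (dmap c) \<and> NNP n (dmap c) \<and> TwoSP n (dmap c) \<and>
          (\<forall>x\<in>Acar n. \<forall>y\<in>Acar n. chain_br (dmap c) n x y = BL n c x y \<and>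
                              chain_f (dmap c) n x y = Lform n x y)"
      using X TwoSP_dmap by blast
  qed
qed

theorem theorem3p1:
  fixes c :: "nat \<Rightarrow> nat \<Rightarrow> nat \<Rightarrow> 'a::field_char_0" and n :: nat
  assumes "3 \<le> n"
  shows
    "let L = (Acar n :: (nat + nat \<Rightarrow> 'a) set);
         w = wfun c n;
         P_a = (quadratic_lie_algebra L (Lbr c n) (Lform n) \<and> two_step_nilpotent L (Lbr c n));
         P_b = (nonzero_w n w \<and> cyclic_cocycle n w \<and>
                (\<forall>x\<in>L. \<forall>y\<in>L. Lbr c n x y = Tstar_br n w x y \<and> Lform n x y = qB n x y));
         P_c = (is_chain n (dmap c) \<and> NNP n (dmap c) \<and> TwoSP n (dmap c) \<and>
                (\<forall>x\<in>L. \<forall>y\<in>L. chain_br (dmap c) n x y = Lbr c n x y \<and>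
                              chain_f (dmap c) n x y = Lform n x y));
         M = (\<lambda>i k j. c i j k);
         P_d = (n_quadratic_family n M \<and> non_null_family n M \<and>
                (\<forall>x\<in>L. \<forall>y\<in>L. qa_br n M x y = Lbr c n x y \<and> qa_form n x y = Lform n x y))
     in (P_a \<longleftrightarrow> P_b) \<and> (P_b \<longleftrightarrow> P_c) \<and> (P_c \<longleftrightarrow> P_d)"
proof -
  have A: "(quadratic_lie_algebra (Acar n :: (nat + nat \<Rightarrow> 'a) set) (Lbr c n) (Lform n) \<and> two_step_nilpotent (Acar n :: (nat + nat \<Rightarrow> 'a) set) (Lbr c n))
      \<longleftrightarrow> alt n c \<and> nzc n c"
    unfolding Lbr_BL by (rule Pa_iff)
  have B: "(nonzero_w n (wfun c n) \<and> cyclic_cocycle n (wfun c n) \<and>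
                (\<forall>x\<in>(Acar n :: (nat + nat \<Rightarrow> 'a) set). \<forall>y\<in>Acar n. Lbr c n x y = Tstar_br n (wfun c n) x y \<and> Lform n x y = qB n x y))
      \<longleftrightarrow> alt n c \<and> nzc n c"
    unfolding Lbr_BL Tstar_BL qB_Lform using Pb_iff[of n c] by simp
  have C: "(is_chain n (dmap c) \<and> NNP n (dmap c) \<and> TwoSP n (dmap c) \<and>
                (\<forall>x\<in>(Acar n :: (nat + nat \<Rightarrow> 'a) set). \<forall>y\<in>Acar n. chain_br (dmap c) n x y = Lbr c n x y \<and>
                              chain_f (dmap c) n x y = Lform n x y))
      \<longleftrightarrow> alt n c \<and> nzc n c"
    unfolding Lbr_BL by (rule Pc_iff)
  have D: "(n_quadratic_family n (\<lambda>i k j. c i j k) \<and> non_null_family n (\<lambda>i k j. c i j k) \<and>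
                (\<forall>x\<in>(Acar n :: (nat + nat \<Rightarrow> 'a) set). \<forall>y\<in>Acar n. qa_br n (\<lambda>i k j. c i j k) x y = Lbr c n x y \<and> qa_form n x y = Lform n x y))
      \<longleftrightarrow> alt n c \<and> nzc n c"
    unfolding Lbr_BL qa_br_BL qa_form_Lform using Pd_iff[of n c] by simp
  show ?thesis unfolding Let_def A B C D by simp
qed
end
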